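(* Assume (i) for every $x\in\mathcal{X}^s$ the ODE $\mathrm{d}Z_\tau=v_0(x,Z_\tau,\tau)\mathrm{d}\tau$, $Z_0\sim N(0,I_{d_y})$, has a unique solution and $Z_1$ is distributed as $Y^s\mid X^s=x$; (ii) $\mathbb{E}\|Y^s\|_2^4<\infty$; (iii) $r_0(X^s)$ is sub-exponentially distributed. Let $\hat v^s_N$ be any (data-dependent) velocity estimator taking values in $[\underline\delta,\bar\delta]^{d_y}$, built from data independent of $X^s,X^t$, for which the ODE $\mathrm{d}\hat Z_\tau=\hat v^s_N(x,\hat Z_\tau,\tau)\mathrm{d}\tau$, $\hat Z_0\sim N(0,I_{d_y})$ is well posed for each $x$ (e.g. $\hat v^s_N$ Lipschitz in its second argument). Then for $N\ge2$, $$\mathcal{E}^t\le c_1\mathcal{E}^s\log N+\frac{c_2d_y[\max(\bar\delta^2,\underline\delta^2)+1]}{N},$$ where $c_1,c_2$ are constants not depending on $N$.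
   Context: $(X^s,Y^s)$ is a source pair with $X^s\in\mathbb{R}^{d_x}$ having density $p$ and $Y^s\in\mathbb{R}^{d_y}$; $X^t\in\mathbb{R}^{d_x}$ has density $q$, $\{q>0\}\subset\mathcal{X}^s=\{p>0\}$, $r_0=q/p$ ($0/0=0$). Under covariate shift, $Y^t|X^t=x$ has the law of $Y^s|X^s=x$. Let $\eta\sim N(0,I_{d_y})$ independent of $(X^s,Y^s)$, and $a_\tau,b_\tau$ continuously differentiable on $[0,1]$ with $a_0=b_1=1$, $a_1=b_0=0$; $Y^s_\tau=a_\tau\eta+b_\tau Y^s$ and $v_0(x,y,\tau)=\mathbb{E}(\dot a_\tau\eta+\dot b_\tau Y^s\mid Y^s_\tau=y,X^s=x)$. Let $\rho_{0,x}$ be the conditional density of $Y^s|X^s=x$ and $\hat\rho^s_x$ the density of $\hat Z_1$ given $x$. With $W_2^2$ the squared 2-Wasserstein distance, $\mathcal{E}^s=\mathbb{E}[W_2^2(\rho_{0,X^s}\|\hat\rho^s_{X^s})]$ and $\mathcal{E}^t=\mathbb{E}[W_2^2(\rho_{0,X^t}\|\hat\rho^s_{X^t})]$, expectations over the test covariate and the training randomness. A real random variable is sub-exponentially distributed if $\mathbb{E}\exp(\varsigma|V|)<\infty$ for some $\varsigma>0$. *)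

theory Defs
  imports "HOL-Probability.Probability"
begin

definition std_gauss :: "'y::euclidean_space measure" where
  "std_gauss = density lborel
     (\<lambda>y. ennreal ((2 * pi) powr (- real DIM('y) / 2) * exp (- (norm y)\<^sup>2 / 2)))"

definition ode_sol :: "('y::euclidean_space \<Rightarrow> real \<Rightarrow> 'y) \<Rightarrow> 'y \<Rightarrow> (real \<Rightarrow> 'y) \<Rightarrow> bool" where
  "ode_sol v z0 z \<longleftrightarrow> z 0 = z0 \<and>
     (\<forall>t\<in>{0..1}. (z has_vector_derivative v (z t) t) (at t within {0..1}))"

definition flow_end :: "('y::euclidean_space \<Rightarrow> real \<Rightarrow> 'y) \<Rightarrow> 'y \<Rightarrow> 'y" where
  "flow_end v z0 = (SOME z. ode_sol v z0 z) 1"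

definition well_posed :: "('y::euclidean_space \<Rightarrow> real \<Rightarrow> 'y) \<Rightarrow> bool" where
  "well_posed v \<longleftrightarrow>
     (\<forall>z0. \<exists>z. ode_sol v z0 z \<and> (\<forall>w. ode_sol v z0 w \<longrightarrow> (\<forall>t\<in>{0..1}. w t = z t))) \<and>
     flow_end v \<in> borel_measurable borel"

definition flow_law :: "('y::euclidean_space \<Rightarrow> real \<Rightarrow> 'y) \<Rightarrow> 'y measure" where
  "flow_law v = distr std_gauss lborel (flow_end v)"

definition couplings :: "'y::euclidean_space measure \<Rightarrow> 'y measure \<Rightarrow> ('y \<times> 'y) measure set" where
  "couplings \<mu> \<nu> = {\<pi>. sets \<pi> = sets (borel \<Otimes>\<^sub>M borel) \<and> prob_space \<pi> \<and>
      distr \<pi> borel fst = \<mu> \<and> distr \<pi> borel snd = \<nu>}"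

definition W2sq :: "'y::euclidean_space measure \<Rightarrow> 'y measure \<Rightarrow> ennreal" where
  "W2sq \<mu> \<nu> = (INF \<pi>\<in>couplings \<mu> \<nu>. \<integral>\<^sup>+ yz. ennreal ((dist (fst yz) (snd yz))\<^sup>2) \<partial>\<pi>)"

text \<open>Expected squared W2 error E[W_2^2(rho_{0,X} || hat rho_X)] where X has density d,
  expectation over the covariate and over the training randomness (measure T), the two
  being independent.\<close>
definition W2_risk :: "('x::euclidean_space \<Rightarrow> real) \<Rightarrow> ('x \<Rightarrow> 'y::euclidean_space \<Rightarrow> real)
    \<Rightarrow> 'w measure \<Rightarrow> ('w \<Rightarrow> 'x \<Rightarrow> 'y \<Rightarrow> real \<Rightarrow> 'y) \<Rightarrow> ennreal" where
  "W2_risk d rho0 T vh = (\<integral>\<^sup>+ \<omega>. \<integral>\<^sup>+ x. ennreal (d x) *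
       W2sq (density lborel (\<lambda>y. ennreal (rho0 x y))) (flow_law (vh \<omega> x)) \<partial>lborel \<partial>T)"

end

theory Submission
  imports Defs
begin

lemma nn_integral_lower_realize:
  fixes G :: "'a \<Rightarrow> ennreal"
  shows "\<exists>g\<in>borel_measurable M. (\<forall>x. g x \<le> G x) \<and> integral\<^sup>N M g = integral\<^sup>N M G"
proof -
  have ne: "{g. simple_function M g \<and> g \<le> G} \<noteq> {}"
  proof -
    have "(\<lambda>_. 0) \<in> {g. simple_function M g \<and> g \<le> G}" by (auto simp: le_fun_def)
    then show ?thesis by blast
  qed
  obtain f :: "nat \<Rightarrow> ennreal" where f: "range f \<subseteq> integral\<^sup>S M ` {g. simple_function M g \<and> g \<le> G}"
    and sup: "integral\<^sup>N M G = Sup (f ` UNIV)"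
    using ennreal_SUP_countable_SUP[OF ne, of "integral\<^sup>S M"] unfolding nn_integral_def by blast
  have "\<forall>i. \<exists>s. simple_function M s \<and> s \<le> G \<and> f i = integral\<^sup>S M s"
    using f by blast
  then obtain s where s: "\<And>i. simple_function M (s i)" "\<And>i. s i \<le> G" "\<And>i. f i = integral\<^sup>S M (s i)"
    by metis
  define g where "g x = (SUP i. s i x)" for x
  have gm: "g \<in> borel_measurable M"
  proof -
    have "\<And>i. s i \<in> borel_measurable M" using s(1) by (rule borel_measurable_simple_function)
    then show ?thesis unfolding g_def by measurable
  qed
  have gle: "\<forall>x. g x \<le> G x"
    using s(2) unfolding g_def by (auto intro!: SUP_least simp: le_fun_def)
  have "integral\<^sup>N M G \<le> integral\<^sup>N M g"
    unfolding sup
  proof (rule SUP_least)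
    fix i
    have "f i = integral\<^sup>N M (s i)" using s by (simp add: nn_integral_eq_simple_integral)
    also have "\<dots> \<le> integral\<^sup>N M g"
      by (intro nn_integral_mono) (auto simp: g_def intro: SUP_upper)
    finally show "f i \<le> integral\<^sup>N M g" .
  qed
  moreover have "integral\<^sup>N M g \<le> integral\<^sup>N M G"
    using gle by (intro nn_integral_mono) auto
  ultimately show ?thesis using gm gle by (intro bexI[of _ g]) auto
qed

lemma nn_integral_add_le_meas:
  fixes f g :: "'a \<Rightarrow> ennreal"
  assumes g: "g \<in> borel_measurable M"
  shows "(\<integral>\<^sup>+x. f x + g x \<partial>M) \<le> integral\<^sup>N M f + integral\<^sup>N M g"
  unfolding nn_integral_def[of M "\<lambda>x. f x + g x"]
proof (rule SUP_least, clarify)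
  fix s assume s: "simple_function M s" "s \<le> (\<lambda>x. f x + g x)"
  have sm: "s \<in> borel_measurable M" using s by (auto intro: borel_measurable_simple_function)
  define h where "h x = (if g x = top then 0 else s x - g x)" for x
  have hm: "h \<in> borel_measurable M" unfolding h_def using sm g by measurable
  have "integral\<^sup>S M s = integral\<^sup>N M s" using s by (simp add: nn_integral_eq_simple_integral)
  also have "\<dots> \<le> (\<integral>\<^sup>+x. h x + g x \<partial>M)"
    by (intro nn_integral_mono) (auto simp: h_def diff_add_self_ennreal nle_le)
  also have "\<dots> = integral\<^sup>N M h + integral\<^sup>N M g"
    using hm g by (intro nn_integral_add) auto
  finally have 1: "integral\<^sup>S M s \<le> integral\<^sup>N M h + integral\<^sup>N M g" .
  have 2: "integral\<^sup>N M h \<le> integral\<^sup>N M f"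
  proof (intro nn_integral_mono)
    fix x have "s x \<le> f x + g x" using s(2) by (auto simp: le_fun_def)
    then show "h x \<le> f x"
      unfolding h_def by (auto simp: ennreal_minus_le_iff add.commute)
  qed
  from 1 2 show "integral\<^sup>S M s \<le> integral\<^sup>N M f + integral\<^sup>N M g"
    by (meson add_right_mono order_trans)
qed

lemma nn_integral_cmult_le:
  fixes f :: "'a \<Rightarrow> ennreal"
  assumes c: "c < top"
  shows "(\<integral>\<^sup>+x. c * f x \<partial>M) \<le> c * integral\<^sup>N M f"
proof (cases "c = 0")
  case True then show ?thesis by simp
next
  case False
  show ?thesis
  unfolding nn_integral_def[of M "\<lambda>x. c * f x"]
  proof (rule SUP_least, clarify)
    fix s assume s: "simple_function M s" "s \<le> (\<lambda>x. c * f x)"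
    have sm: "s \<in> borel_measurable M" using s by (auto intro: borel_measurable_simple_function)
    have eq: "\<And>x. s x = c * (s x / c)"
      using False c by (metis ennreal_times_divide mult.commute mult_divide_eq_ennreal top.extremum_strict)
    have "integral\<^sup>S M s = integral\<^sup>N M s" using s by (simp add: nn_integral_eq_simple_integral)
    also have "\<dots> = (\<integral>\<^sup>+x. c * (s x / c) \<partial>M)" using eq by (intro nn_integral_cong) metis
    also have "\<dots> = c * (\<integral>\<^sup>+x. s x / c \<partial>M)" using sm by (intro nn_integral_cmult) auto
    also have "\<dots> \<le> c * integral\<^sup>N M f"
    proof (intro mult_left_mono nn_integral_mono)
      fix x have "s x \<le> c * f x" using s(2) by (auto simp: le_fun_def)
      then show "s x / c \<le> f x"
        using False c by (metis divide_le_posI_ennreal mult.commute not_gr_zero top.not_eq_extremum)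
    qed simp
    finally show "integral\<^sup>S M s \<le> c * integral\<^sup>N M f" .
  qed
qed


lemma emeasure_density_gen:
  assumes nz: "emeasure (density M f) (space M) \<noteq> 0" and A: "A \<in> sets M"
  shows "emeasure (density M f) A = (\<integral>\<^sup>+ x. f x * indicator A x \<partial>M)"
proof -
  have sig: "sigma_sets (space M) (sets M) = sets M" by (rule sets.sigma_sets_eq)
  let ?mu = "\<lambda>A. \<integral>\<^sup>+ x. f x * indicator A x \<partial>M"
  have ms: "measure_space (space M) (sets M) ?mu"
  proof (rule ccontr)
    assume "\<not> ?thesis"
    then have "emeasure (density M f) (space M) = 0"
      unfolding density_def emeasure_measure_of_conv sig by simp
    with nz show False by simp
  qed
  show ?thesis
    unfolding density_def emeasure_measure_of_conv sig using ms A by simp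
qed

lemma flow_end_incr:
  fixes v :: "'y::euclidean_space \<Rightarrow> real \<Rightarrow> 'y"
  assumes wp: "well_posed v"
    and bd: "\<forall>y t. \<forall>i\<in>Basis. dl \<le> v y t \<bullet> i \<and> v y t \<bullet> i \<le> du"
    and i: "i \<in> Basis"
  shows "dl \<le> (flow_end v z0 - z0) \<bullet> i \<and> (flow_end v z0 - z0) \<bullet> i \<le> du"
proof -
  from wp obtain z where "ode_sol v z0 z" unfolding well_posed_def by blast
  then have w: "ode_sol v z0 (SOME z. ode_sol v z0 z)" by (rule someI[of "ode_sol v z0"])
  define w where "w = (SOME z. ode_sol v z0 z)"
  have fe: "flow_end v z0 = w 1" unfolding flow_end_def w_def ..
  have w0: "w 0 = z0" and wd: "\<And>t. t \<in> {0..1} \<Longrightarrow> (w has_vector_derivative v (w t) t) (at t within {0..1})"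
    using w unfolding w_def ode_sol_def by auto
  have "\<exists>x\<in>{0..1}. w 1 \<bullet> i - w 0 \<bullet> i = (\<lambda>h. (h *\<^sub>R v (w x) x) \<bullet> i) (1 - 0)"
  proof (rule mvt_very_simple[where f="\<lambda>t. w t \<bullet> i"])
    fix x :: real assume "0 \<le> x" "x \<le> 1"
    then have "(w has_derivative (\<lambda>h. h *\<^sub>R v (w x) x)) (at x within {0..1})"
      using wd[of x] unfolding has_vector_derivative_def by auto
    then show "((\<lambda>t. w t \<bullet> i) has_derivative (\<lambda>h. (h *\<^sub>R v (w x) x) \<bullet> i)) (at x within {0..1})"
      by (rule has_derivative_inner_left)
  qed simp
  then obtain x where "w 1 \<bullet> i - w 0 \<bullet> i = v (w x) x \<bullet> i" by auto
  then have "(flow_end v z0 - z0) \<bullet> i = v (w x) x \<bullet> i"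
    using fe w0 by (simp add: inner_diff_left)
  then show ?thesis using bd i by auto
qed

lemma flow_end_norm:
  fixes v :: "'y::euclidean_space \<Rightarrow> real \<Rightarrow> 'y"
  assumes wp: "well_posed v"
    and bd: "\<forall>y t. \<forall>i\<in>Basis. dl \<le> v y t \<bullet> i \<and> v y t \<bullet> i \<le> du"
  shows "(norm (flow_end v z0 - z0))\<^sup>2 \<le> real DIM('y) * max (du\<^sup>2) (dl\<^sup>2)"
proof -
  let ?d = "flow_end v z0 - z0"
  have "(norm ?d)\<^sup>2 = ?d \<bullet> ?d" by (simp add: power2_norm_eq_inner)
  also have "\<dots> = (\<Sum>b\<in>Basis. (?d \<bullet> b)\<^sup>2)" by (subst euclidean_inner) (simp add: power2_eq_square)
  also have "\<dots> \<le> (\<Sum>b\<in>(Basis::'y set). max (du\<^sup>2) (dl\<^sup>2))"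
  proof (rule sum_mono)
    fix b :: 'y assume b: "b \<in> Basis"
    from flow_end_incr[OF wp bd b, of z0] have "dl \<le> ?d \<bullet> b" "?d \<bullet> b \<le> du" by auto
    then show "(?d \<bullet> b)\<^sup>2 \<le> max (du\<^sup>2) (dl\<^sup>2)"
    proof (cases "0 \<le> ?d \<bullet> b")
      case True
      then have "(?d \<bullet> b)\<^sup>2 \<le> du\<^sup>2" using \<open>?d \<bullet> b \<le> du\<close> by (intro power_mono) auto
      then show ?thesis by linarith
    next
      case False
      then have "(- (?d \<bullet> b))\<^sup>2 \<le> (- dl)\<^sup>2" using \<open>dl \<le> ?d \<bullet> b\<close> by (intro power_mono) auto
      then show ?thesis by simp
    qed
  qed
  also have "\<dots> = real DIM('y) * max (du\<^sup>2) (dl\<^sup>2)" by simp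
  finally show ?thesis .
qed

lemma tail_ineq:
  fixes s r N :: real
  assumes s: "s > 0" and N: "N \<ge> 1" and r: "(4 / s) * ln N < r"
  shows "r\<^sup>2 \<le> (4 / s)\<^sup>2 * exp (s * r) / N\<^sup>2"
proof -
  have r0: "r > 0" using r s N by (smt (verit) divide_pos_pos ln_ge_zero mult_nonneg_nonneg)
  have "s * r / 4 < exp (s * r / 4)" by (smt (verit) exp_ge_add_one_self)
  then have "r \<le> (4 / s) * exp (s * r / 4)" using s by (simp add: field_simps)
  then have "r\<^sup>2 \<le> ((4 / s) * exp (s * r / 4))\<^sup>2" using r0 by (intro power_mono) auto
  also have "\<dots> = (4 / s)\<^sup>2 * exp (s * r / 2)"
    by (simp add: power_mult_distrib power2_eq_square exp_add[symmetric])
  also have "exp (s * r / 2) \<le> exp (s * r) / N\<^sup>2"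
  proof -
    have "2 * ln N < s * r / 2" using r s by (simp add: field_simps)
    then have "exp (2 * ln N) \<le> exp (s * r / 2)" by simp
    moreover have "exp (2 * ln N) = N\<^sup>2"
    proof -
      have "exp (2 * ln N) = exp (ln N) * exp (ln N)" by (simp add: exp_add[symmetric])
      then show ?thesis using N by (simp add: power2_eq_square)
    qed
    ultimately have "N\<^sup>2 \<le> exp (s * r / 2)" by simp
    moreover have "exp (s * r) = exp (s * r / 2) * exp (s * r / 2)" by (simp add: exp_add[symmetric])
    ultimately show ?thesis using N by (simp add: field_simps mult_right_mono)
  qed
  then have "(4 / s)\<^sup>2 * exp (s * r / 2) \<le> (4 / s)\<^sup>2 * (exp (s * r) / N\<^sup>2)"
    by (intro mult_left_mono) auto
  finally show ?thesis by simp
qed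



lemma gauss_moment_finite:
  assumes P: "prob_space (std_gauss :: 'y::euclidean_space measure)"
  shows "(\<integral>\<^sup>+ y. ennreal ((norm y)\<^sup>2) \<partial>(std_gauss :: 'y measure)) < \<infinity>"
proof -
  define c :: real where "c = (2 * pi) powr (- real DIM('y) / 2)"
  have c0: "c > 0" unfolding c_def by simp
  define g0 :: "'y \<Rightarrow> ennreal" where "g0 y = ennreal (c * exp (- (norm y)\<^sup>2 / 2))" for y
  have g0m: "g0 \<in> borel_measurable borel" unfolding g0_def by measurable
  have sg: "(std_gauss :: 'y measure) = density lborel g0"
    unfolding std_gauss_def g0_def c_def ..
  have "emeasure (std_gauss :: 'y measure) UNIV = 1"
    using prob_space.emeasure_space_1[OF P] by (simp add: sg)
  then have int1: "(\<integral>\<^sup>+ y. g0 y \<partial>lborel) = 1"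
    by (simp add: sg emeasure_density g0m)
  define f :: "'y \<Rightarrow> ennreal" where "f y = ennreal (4 * c * exp (- (norm y)\<^sup>2 / 4))" for y
  have fm: "f \<in> borel_measurable borel" unfolding f_def by measurable
  have "(\<integral>\<^sup>+ y. ennreal ((norm y)\<^sup>2) \<partial>(std_gauss :: 'y measure)) = (\<integral>\<^sup>+ y. g0 y * ennreal ((norm y)\<^sup>2) \<partial>lborel)"
    unfolding sg using g0m by (subst nn_integral_density) auto
  also have "\<dots> \<le> (\<integral>\<^sup>+ y. f y \<partial>lborel)"
  proof (intro nn_integral_mono)
    fix y :: 'y
    define u where "u = (norm y)\<^sup>2"
    have u0: "u \<ge> 0" unfolding u_def by simp
    have "u / 4 < exp (u / 4)" by (smt (verit) exp_ge_add_one_self)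
    then have "u \<le> 4 * exp (u / 4)" by simp
    then have "c * exp (- u / 2) * u \<le> c * exp (- u / 2) * (4 * exp (u / 4))"
      using c0 by (intro mult_left_mono) auto
    also have "\<dots> = 4 * c * (exp (- u / 2) * exp (u / 4))" by simp
    also have "exp (- u / 2) * exp (u / 4) = exp (- u / 4)" by (simp add: exp_add[symmetric])
    finally have "c * exp (- u / 2) * u \<le> 4 * c * exp (- u / 4)" .
    then show "g0 y * ennreal ((norm y)\<^sup>2) \<le> f y"
      unfolding g0_def f_def u_def using c0 by (simp add: ennreal_mult'[symmetric] ennreal_leI)
  qed
  also have "(\<integral>\<^sup>+ y. f y \<partial>lborel) = ennreal (4 * sqrt 2 ^ DIM('y))"
  proof -
    have s2: "sqrt 2 \<noteq> (0::real)" by simp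
    have "(\<integral>\<^sup>+ y. f y \<partial>lborel) = (\<integral>\<^sup>+ y. f y \<partial>density (distr lborel borel (\<lambda>x. 0 + sqrt 2 *\<^sub>R x)) (\<lambda>_. \<bar>sqrt 2\<bar> ^ DIM('y)))"
      by (subst lborel_affine[OF s2, of 0, symmetric]) rule
    also have "\<dots> = (\<integral>\<^sup>+ x. ennreal (sqrt 2 ^ DIM('y)) * f (sqrt 2 *\<^sub>R x) \<partial>lborel)"
      using fm by (simp add: nn_integral_density nn_integral_distr)
    also have "\<dots> = (\<integral>\<^sup>+ x. ennreal (4 * sqrt 2 ^ DIM('y)) * g0 x \<partial>lborel)"
    proof (intro nn_integral_cong)
      fix x :: 'y
      have "(norm (sqrt 2 *\<^sub>R x))\<^sup>2 / 4 = (norm x)\<^sup>2 / 2"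
        by (simp add: power_mult_distrib)
      then show "ennreal (sqrt 2 ^ DIM('y)) * f (sqrt 2 *\<^sub>R x) = ennreal (4 * sqrt 2 ^ DIM('y)) * g0 x"
        unfolding f_def g0_def using c0
        by (simp add: ennreal_mult'[symmetric] ennreal_mult[symmetric] mult_ac del: norm_scaleR)
    qed
    also have "\<dots> = ennreal (4 * sqrt 2 ^ DIM('y))" using g0m int1 by (simp add: nn_integral_cmult)
    finally show ?thesis .
  qed
  finally show ?thesis by (simp add: le_less_trans)
qed



lemma ennreal_sum_eq_le:
  fixes a b c d :: ennreal
  shows "a \<le> c \<Longrightarrow> b \<le> d \<Longrightarrow> a + b = c + d \<Longrightarrow> d < top \<Longrightarrow> a = c"
  by (metis add_strict_mono ennreal_add_diff_cancel_right not_le not_less_iff_gr_or_eq)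

lemma ennreal_le_diff_aux:
  fixes p a b g :: ennreal
  shows "p = a + b \<Longrightarrow> g \<le> b \<Longrightarrow> b < top \<Longrightarrow> a \<le> p - g"
  by (metis ennreal_add_diff_cancel_right ennreal_mono_minus leD order_trans_rules(24) top.not_eq_extremum)

lemma disint_upper:
  fixes M :: "'m measure" and Xs :: "'m \<Rightarrow> 'x::euclidean_space" and Ys :: "'m \<Rightarrow> 'y::euclidean_space"
    and p :: "'x \<Rightarrow> real" and rho0 :: "'x \<Rightarrow> 'y \<Rightarrow> real"
  assumes M: "prob_space M"
    and Xs_rv: "Xs \<in> M \<rightarrow>\<^sub>M borel" and Ys_rv: "Ys \<in> M \<rightarrow>\<^sub>M borel"
    and p_nonneg: "\<And>x. 0 \<le> p x" and p_meas: "p \<in> borel_measurable borel"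
    and Xs_density: "distr M lborel Xs = density lborel (\<lambda>x. ennreal (p x))"
    and rho0_cond: "\<And>A B. A \<in> sets borel \<Longrightarrow> B \<in> sets borel \<Longrightarrow>
        emeasure M {\<omega> \<in> space M. Xs \<omega> \<in> A \<and> Ys \<omega> \<in> B}
        = (\<integral>\<^sup>+ x\<in>A. ennreal (p x) * (\<integral>\<^sup>+ y\<in>B. ennreal (rho0 x y) \<partial>lborel) \<partial>lborel)"
    and probx: "\<And>x. 0 < p x \<Longrightarrow> prob_space (density lborel (\<lambda>y. ennreal (rho0 x y)))"
    and B: "B \<in> sets borel"
  shows "\<exists>U \<in> borel_measurable borel.
     (\<forall>x. 0 < p x \<longrightarrow> ennreal (p x) * emeasure (density lborel (\<lambda>y. ennreal (rho0 x y))) B \<le> U x) \<and>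
     (\<forall>A \<in> sets borel. (\<integral>\<^sup>+ x. U x * indicator A x \<partial>lborel) = emeasure M {\<omega>\<in>space M. Xs \<omega> \<in> A \<and> Ys \<omega> \<in> B})"
proof -
  interpret M: prob_space M by fact
  define nu where "nu x = density lborel (\<lambda>y. ennreal (rho0 x y))" for x
  define mu where "mu A B' = emeasure M {\<omega>\<in>space M. Xs \<omega> \<in> A \<and> Ys \<omega> \<in> B'}" for A B'
  have mu_sets: "{\<omega>\<in>space M. Xs \<omega> \<in> A \<and> Ys \<omega> \<in> B'} \<in> sets M" if "A \<in> sets borel" "B' \<in> sets borel" for A B'
    using Xs_rv Ys_rv that by measurable
  have mu_fin: "mu A B' < top" for A B' unfolding mu_def by (simp add: M.emeasure_finite less_top[symmetric])
  have mu_add: "mu A B1 + mu A B2 = mu A (B1 \<union> B2)"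
    if "A \<in> sets borel" "B1 \<in> sets borel" "B2 \<in> sets borel" "B1 \<inter> B2 = {}" for A B1 B2
  proof -
    have "mu A B1 + mu A B2 = emeasure M ({\<omega>\<in>space M. Xs \<omega> \<in> A \<and> Ys \<omega> \<in> B1} \<union> {\<omega>\<in>space M. Xs \<omega> \<in> A \<and> Ys \<omega> \<in> B2})"
      unfolding mu_def using that mu_sets by (intro plus_emeasure) auto
    also have "({\<omega>\<in>space M. Xs \<omega> \<in> A \<and> Ys \<omega> \<in> B1} \<union> {\<omega>\<in>space M. Xs \<omega> \<in> A \<and> Ys \<omega> \<in> B2}) = {\<omega>\<in>space M. Xs \<omega> \<in> A \<and> Ys \<omega> \<in> B1 \<union> B2}"
      by auto
    finally show ?thesis unfolding mu_def .
  qed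
  have mu_addA: "mu A1 B' + mu A2 B' = mu (A1 \<union> A2) B'"
    if "A1 \<in> sets borel" "A2 \<in> sets borel" "B' \<in> sets borel" "A1 \<inter> A2 = {}" for A1 A2 B'
  proof -
    have "mu A1 B' + mu A2 B' = emeasure M ({\<omega>\<in>space M. Xs \<omega> \<in> A1 \<and> Ys \<omega> \<in> B'} \<union> {\<omega>\<in>space M. Xs \<omega> \<in> A2 \<and> Ys \<omega> \<in> B'})"
      unfolding mu_def using that mu_sets by (intro plus_emeasure) auto
    also have "({\<omega>\<in>space M. Xs \<omega> \<in> A1 \<and> Ys \<omega> \<in> B'} \<union> {\<omega>\<in>space M. Xs \<omega> \<in> A2 \<and> Ys \<omega> \<in> B'}) = {\<omega>\<in>space M. Xs \<omega> \<in> A1 \<union> A2 \<and> Ys \<omega> \<in> B'}"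
      by auto
    finally show ?thesis unfolding mu_def .
  qed
  have nu_eq: "(\<integral>\<^sup>+ y. ennreal (rho0 x y) * indicator B' y \<partial>lborel) = emeasure (nu x) B'"
    if "0 < p x" "B' \<in> sets borel" for x B'
  proof -
    interpret P: prob_space "nu x" using probx[OF that(1)] unfolding nu_def .
    show ?thesis unfolding nu_def
      by (rule emeasure_density_gen[symmetric]) (use P.emeasure_space_1 that in \<open>auto simp: nu_def\<close>)
  qed
  define Bc where "Bc = UNIV - B"
  have Bc: "Bc \<in> sets borel" unfolding Bc_def using B by auto
  define G where "G x = ennreal (p x) * (\<integral>\<^sup>+ y. ennreal (rho0 x y) * indicator Bc y \<partial>lborel)" for x
  have G_int: "(\<integral>\<^sup>+ x. G x * indicator A x \<partial>lborel) = mu A Bc" if "A \<in> sets borel" for A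
    using rho0_cond[OF that Bc] unfolding mu_def G_def by simp
  obtain g where gm: "g \<in> borel_measurable borel" and gG: "\<forall>x. g x \<le> G x"
    and gint: "integral\<^sup>N lborel g = integral\<^sup>N lborel G"
    using nn_integral_lower_realize[of lborel G] by auto
  have gint': "integral\<^sup>N lborel g = mu UNIV Bc" using gint G_int[of UNIV] by simp
  have gp: "g x \<le> ennreal (p x)" for x
  proof (cases "0 < p x")
    case True
    interpret P: prob_space "nu x" using probx[OF True] unfolding nu_def .
    have "G x = ennreal (p x) * emeasure (nu x) Bc" unfolding G_def using nu_eq[OF True Bc] by simp
    also have "\<dots> \<le> ennreal (p x) * 1" by (intro mult_left_mono) (auto simp: P.emeasure_le_1)
    finally show ?thesis using gG[rule_format, of x] by simp
  next
    case False
    then have "p x = 0" using p_nonneg[of x] by simp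
    then show ?thesis using gG[rule_format, of x] by (simp add: G_def)
  qed
  have gA: "(\<integral>\<^sup>+ x. g x * indicator A x \<partial>lborel) = mu A Bc" if A: "A \<in> sets borel" for A
  proof -
    have le1: "(\<integral>\<^sup>+ x. g x * indicator A x \<partial>lborel) \<le> mu A Bc"
      unfolding G_int[OF A, symmetric] using gG by (intro nn_integral_mono) (auto intro: mult_right_mono)
    have le2: "(\<integral>\<^sup>+ x. g x * indicator (UNIV - A) x \<partial>lborel) \<le> mu (UNIV - A) Bc"
      unfolding G_int[of "UNIV - A", OF sets.compl_sets[OF A, simplified], symmetric] using gG
      by (intro nn_integral_mono) (auto intro: mult_right_mono)
    have "(\<integral>\<^sup>+ x. g x * indicator A x \<partial>lborel) + (\<integral>\<^sup>+ x. g x * indicator (UNIV - A) x \<partial>lborel)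
        = (\<integral>\<^sup>+ x. g x * indicator A x + g x * indicator (UNIV - A) x \<partial>lborel)"
      using gm A by (intro nn_integral_add[symmetric]) auto
    also have "\<dots> = integral\<^sup>N lborel g"
      by (intro nn_integral_cong) (auto split: split_indicator)
    also have "\<dots> = mu A Bc + mu (UNIV - A) Bc"
      unfolding gint' using A Bc by (subst mu_addA) auto
    finally show ?thesis
      by (rule ennreal_sum_eq_le[OF le1 le2 _ mu_fin])
  qed
  define U where "U x = ennreal (p x) - g x" for x
  have Um: "U \<in> borel_measurable borel" unfolding U_def using gm p_meas by measurable
  have U1: "ennreal (p x) * emeasure (nu x) B \<le> U x" if px: "0 < p x" for x
  proof -
    interpret P: prob_space "nu x" using probx[OF px] unfolding nu_def .
    have sum1: "emeasure (nu x) B + emeasure (nu x) Bc = 1"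
    proof -
      have "emeasure (nu x) B + emeasure (nu x) Bc = emeasure (nu x) (B \<union> Bc)"
        using B Bc by (intro plus_emeasure) (auto simp: nu_def Bc_def)
      also have "B \<union> Bc = space (nu x)" by (auto simp: Bc_def nu_def)
      finally show ?thesis by (simp add: P.emeasure_space_1)
    qed
    have "ennreal (p x) = ennreal (p x) * emeasure (nu x) B + ennreal (p x) * emeasure (nu x) Bc"
      by (simp add: distrib_left[symmetric] sum1)
    moreover have "g x \<le> ennreal (p x) * emeasure (nu x) Bc"
      using gG[rule_format, of x] unfolding G_def using nu_eq[OF px Bc] by simp
    moreover have "ennreal (p x) * emeasure (nu x) Bc < top"
    proof -
      have "emeasure (nu x) Bc \<le> 1" by (rule P.emeasure_le_1)
      then have "emeasure (nu x) Bc < top" using order_le_less_trans by fastforce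
      then show ?thesis by (simp add: ennreal_mult_less_top)
    qed
    ultimately show ?thesis unfolding U_def by (rule ennreal_le_diff_aux)
  qed
  have U2: "(\<integral>\<^sup>+ x. U x * indicator A x \<partial>lborel) = mu A B" if A: "A \<in> sets borel" for A
  proof -
    have "(\<integral>\<^sup>+ x. U x * indicator A x \<partial>lborel) = (\<integral>\<^sup>+ x. ennreal (p x) * indicator A x - g x * indicator A x \<partial>lborel)"
      unfolding U_def by (intro nn_integral_cong) (auto split: split_indicator)
    also have "\<dots> = (\<integral>\<^sup>+ x. ennreal (p x) * indicator A x \<partial>lborel) - (\<integral>\<^sup>+ x. g x * indicator A x \<partial>lborel)"
      using gm p_meas A gp mu_fin[of A Bc] gA[OF A]
      by (intro nn_integral_diff) (auto split: split_indicator)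
    also have "(\<integral>\<^sup>+ x. ennreal (p x) * indicator A x \<partial>lborel) = mu A UNIV"
    proof -
      have "(\<integral>\<^sup>+ x. ennreal (p x) * indicator A x \<partial>lborel) = emeasure (density lborel (\<lambda>x. ennreal (p x))) A"
        using p_meas A by (simp add: emeasure_density)
      also have "\<dots> = emeasure (distr M lborel Xs) A" by (simp add: Xs_density)
      also have "\<dots> = emeasure M (Xs -` A \<inter> space M)"
        using Xs_rv A by (intro emeasure_distr) auto
      also have "Xs -` A \<inter> space M = {\<omega>\<in>space M. Xs \<omega> \<in> A \<and> Ys \<omega> \<in> UNIV}" by auto
      finally show ?thesis unfolding mu_def .
    qed
    also have "mu A UNIV = mu A B + mu A Bc" using mu_add[OF A B Bc] unfolding Bc_def by auto
    finally show ?thesis using gA[OF A] mu_fin[of A Bc]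
      by (simp add: ennreal_add_diff_cancel_right less_top)
  qed
  show ?thesis using Um U1 U2 unfolding mu_def nu_def by blast
qed



lemma sq_sum_le: "((x::real) + y)\<^sup>2 \<le> 2 * x\<^sup>2 + 2 * y\<^sup>2"
proof -
  have "(x+y)\<^sup>2 = x\<^sup>2 + 2*x*y + y\<^sup>2" "(x-y)\<^sup>2 = x\<^sup>2 - 2*x*y + y\<^sup>2"
    by (simp_all add: power2_eq_square algebra_simps)
  moreover have "0 \<le> (x-y)\<^sup>2" by simp
  ultimately show ?thesis by linarith
qed

lemma ennreal_lin3: "0 \<le> A \<Longrightarrow> 0 \<le> B \<Longrightarrow> 0 \<le> C \<Longrightarrow>
   2 * ennreal A + 4 * ennreal B + ennreal C = ennreal (2*A + 4*B + C)"
  by (simp add: ennreal_plus ennreal_mult)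

lemma W2_bound:
  fixes v0x vh :: "'y::euclidean_space \<Rightarrow> real \<Rightarrow> 'y"
  assumes P: "prob_space (std_gauss :: 'y measure)" and wp0: "well_posed v0x" and wph: "well_posed vh"
   and bd: "\<forall>y t. \<forall>i\<in>Basis. dl \<le> vh y t \<bullet> i \<and> vh y t \<bullet> i \<le> du"
  shows "W2sq (flow_law v0x) (flow_law vh) \<le> 2 * (\<integral>\<^sup>+ y. ennreal ((norm y)\<^sup>2) \<partial>flow_law v0x)
      + 4 * (\<integral>\<^sup>+ z. ennreal ((norm z)\<^sup>2) \<partial>(std_gauss :: 'y measure)) + ennreal (4 * real DIM('y) * max (du\<^sup>2) (dl\<^sup>2))"
proof -
  interpret P: prob_space "std_gauss :: 'y measure" by fact
  let ?g = "std_gauss :: 'y measure"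
  define D where "D = real DIM('y) * max (du\<^sup>2) (dl\<^sup>2)"
  have D0: "D \<ge> 0" unfolding D_def by (simp add: le_max_iff_disj)
  have sg: "sets ?g = sets borel" by (simp add: std_gauss_def)
  have Z1m: "flow_end v0x \<in> borel_measurable ?g"
    using wp0 unfolding well_posed_def using measurable_cong_sets[OF sg refl] by blast
  have Zhm: "flow_end vh \<in> borel_measurable ?g"
    using wph unfolding well_posed_def using measurable_cong_sets[OF sg refl] by blast
  define Z where "Z z = (flow_end v0x z, flow_end vh z)" for z
  have Zm: "Z \<in> measurable ?g (borel \<Otimes>\<^sub>M borel)" unfolding Z_def using Z1m Zhm by measurable
  define pi where "pi = distr ?g (borel \<Otimes>\<^sub>M borel) Z"
  have fl0: "flow_law v0x = distr ?g borel (flow_end v0x)"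
    unfolding flow_law_def by (rule distr_cong) auto
  have flh: "flow_law vh = distr ?g borel (flow_end vh)"
    unfolding flow_law_def by (rule distr_cong) auto
  have "pi \<in> couplings (flow_law v0x) (flow_law vh)"
    unfolding couplings_def
  proof (intro CollectI conjI)
    show "sets pi = sets (borel \<Otimes>\<^sub>M borel)" unfolding pi_def by simp
    show "prob_space pi" unfolding pi_def by (rule P.prob_space_distr[OF Zm])
    show "distr pi borel fst = flow_law v0x"
      unfolding pi_def fl0 using Zm by (subst distr_distr) (auto simp: Z_def comp_def)
    show "distr pi borel snd = flow_law vh"
      unfolding pi_def flh using Zm by (subst distr_distr) (auto simp: Z_def comp_def)
  qed
  then have "W2sq (flow_law v0x) (flow_law vh) \<le> (\<integral>\<^sup>+ yz. ennreal ((dist (fst yz) (snd yz))\<^sup>2) \<partial>pi)"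
    unfolding W2sq_def by (rule INF_lower)
  also have "\<dots> = (\<integral>\<^sup>+ z. ennreal ((dist (flow_end v0x z) (flow_end vh z))\<^sup>2) \<partial>?g)"
    unfolding pi_def using Zm by (subst nn_integral_distr) (auto simp: Z_def)
  also have "\<dots> \<le> (\<integral>\<^sup>+ z. 2 * ennreal ((norm (flow_end v0x z))\<^sup>2) + 4 * ennreal ((norm z)\<^sup>2) + ennreal (4 * D) \<partial>?g)"
  proof (intro nn_integral_mono)
    fix z :: 'y
    let ?a = "flow_end v0x z" and ?b = "flow_end vh z"
    have bz: "(norm (?b - z))\<^sup>2 \<le> D" unfolding D_def by (rule flow_end_norm[OF wph bd])
    have "dist ?a ?b \<le> norm ?a + norm ?b" by (simp add: dist_norm norm_triangle_ineq4)
    then have "(dist ?a ?b)\<^sup>2 \<le> (norm ?a + norm ?b)\<^sup>2" by (intro power_mono) auto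
    also have "\<dots> \<le> 2 * (norm ?a)\<^sup>2 + 2 * (norm ?b)\<^sup>2" by (rule sq_sum_le)
    finally have h1: "(dist ?a ?b)\<^sup>2 \<le> 2 * (norm ?a)\<^sup>2 + 2 * (norm ?b)\<^sup>2" .
    have h2: "(norm ?b)\<^sup>2 \<le> 2 * (norm z)\<^sup>2 + 2 * (norm (?b - z))\<^sup>2"
    proof -
      have "norm ?b \<le> norm z + norm (?b - z)" by (metis add.commute diff_add_cancel norm_triangle_ineq)
      then have "(norm ?b)\<^sup>2 \<le> (norm z + norm (?b - z))\<^sup>2" by (intro power_mono) auto
      also have "\<dots> \<le> 2 * (norm z)\<^sup>2 + 2 * (norm (?b - z))\<^sup>2" by (rule sq_sum_le)
      finally show ?thesis .
    qed
    have "(dist ?a ?b)\<^sup>2 \<le> 2 * (norm ?a)\<^sup>2 + 4 * (norm z)\<^sup>2 + 4 * D" using h1 h2 bz by linarith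
    then have h: "ennreal ((dist ?a ?b)\<^sup>2) \<le> ennreal (2 * (norm ?a)\<^sup>2 + 4 * (norm z)\<^sup>2 + 4 * D)"
      by (rule ennreal_leI)
    have eq: "2 * ennreal ((norm ?a)\<^sup>2) + 4 * ennreal ((norm z)\<^sup>2) + ennreal (4 * D) = ennreal (2 * (norm ?a)\<^sup>2 + 4 * (norm z)\<^sup>2 + 4 * D)"
      by (rule ennreal_lin3) (use D0 in auto)
    show "ennreal ((dist ?a ?b)\<^sup>2) \<le> 2 * ennreal ((norm ?a)\<^sup>2) + 4 * ennreal ((norm z)\<^sup>2) + ennreal (4 * D)"
      unfolding eq by (rule h)
  qed
  also have "\<dots> = 2 * (\<integral>\<^sup>+ z. ennreal ((norm (flow_end v0x z))\<^sup>2) \<partial>?g) + 4 * (\<integral>\<^sup>+ z. ennreal ((norm z)\<^sup>2) \<partial>?g) + ennreal (4 * D)"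
  proof -
    have m1: "(\<lambda>z. ennreal ((norm (flow_end v0x z))\<^sup>2)) \<in> borel_measurable ?g" using Z1m by measurable
    have m2: "(\<lambda>z. ennreal ((norm z)\<^sup>2)) \<in> borel_measurable ?g"
    proof -
      have "(\<lambda>z::'y. z) \<in> borel_measurable ?g" by (rule measurable_ident_sets[OF sg])
      then show ?thesis by measurable
    qed
    have "(\<integral>\<^sup>+ z. 2 * ennreal ((norm (flow_end v0x z))\<^sup>2) + 4 * ennreal ((norm z)\<^sup>2) + ennreal (4 * D) \<partial>?g)
      = (\<integral>\<^sup>+ z. 2 * ennreal ((norm (flow_end v0x z))\<^sup>2) + 4 * ennreal ((norm z)\<^sup>2) \<partial>?g) + (\<integral>\<^sup>+ z. ennreal (4 * D) \<partial>?g)"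
      using m1 m2 by (intro nn_integral_add) auto
    also have "(\<integral>\<^sup>+ z. 2 * ennreal ((norm (flow_end v0x z))\<^sup>2) + 4 * ennreal ((norm z)\<^sup>2) \<partial>?g)
      = (\<integral>\<^sup>+ z. 2 * ennreal ((norm (flow_end v0x z))\<^sup>2) \<partial>?g) + (\<integral>\<^sup>+ z. 4 * ennreal ((norm z)\<^sup>2) \<partial>?g)"
      using m1 m2 by (intro nn_integral_add) auto
    also have "(\<integral>\<^sup>+ z. 2 * ennreal ((norm (flow_end v0x z))\<^sup>2) \<partial>?g) = 2 * (\<integral>\<^sup>+ z. ennreal ((norm (flow_end v0x z))\<^sup>2) \<partial>?g)"
      using m1 by (rule nn_integral_cmult)
    also have "(\<integral>\<^sup>+ z. 4 * ennreal ((norm z)\<^sup>2) \<partial>?g) = 4 * (\<integral>\<^sup>+ z. ennreal ((norm z)\<^sup>2) \<partial>?g)"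
      using m2 by (rule nn_integral_cmult)
    also have "(\<integral>\<^sup>+ z. ennreal (4 * D) \<partial>?g) = ennreal (4 * D)"
      by (simp add: P.emeasure_space_1)
    finally show ?thesis .
  qed
  also have "(\<integral>\<^sup>+ z. ennreal ((norm (flow_end v0x z))\<^sup>2) \<partial>?g) = (\<integral>\<^sup>+ y. ennreal ((norm y)\<^sup>2) \<partial>flow_law v0x)"
    unfolding fl0 using Z1m by (subst nn_integral_distr) auto
  finally show ?thesis unfolding D_def by (simp only: mult.assoc)
qed



lemma floor_ind_iff: "0 \<le> (u::real) \<Longrightarrow> real (Suc k) \<le> u \<longleftrightarrow> k < nat \<lfloor>u\<rfloor>"
proof -
  assume "0 \<le> u"
  have "real (Suc k) \<le> u \<longleftrightarrow> int (Suc k) \<le> \<lfloor>u\<rfloor>" by (simp add: le_floor_iff)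
  also have "\<dots> \<longleftrightarrow> k < nat \<lfloor>u\<rfloor>" using zless_nat_eq_int_zless[of k "\<lfloor>u\<rfloor>"] by arith
  finally show ?thesis .
qed

lemma floor_ind_iff': "0 \<le> (u::real) \<Longrightarrow> 1 + real k \<le> u \<longleftrightarrow> k < nat \<lfloor>u\<rfloor>"
  using floor_ind_iff[of u k] by simp

lemma floor_ind_sum:
  fixes u :: real assumes u: "0 \<le> u"
  shows "(\<Sum>k. (indicator {v. real (Suc k) \<le> v} u :: ennreal)) = of_nat (nat \<lfloor>u\<rfloor>)"
proof -
  have "(\<Sum>k. (indicator {v. real (Suc k) \<le> v} u :: ennreal)) = (\<Sum>k\<in>{..<nat \<lfloor>u\<rfloor>}. indicator {v. real (Suc k) \<le> v} u)"
    by (rule suminf_finite) (auto simp: indicator_def floor_ind_iff[OF u] floor_ind_iff'[OF u])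
  also have "\<dots> = (\<Sum>k\<in>{..<nat \<lfloor>u\<rfloor>}. 1)"
    by (intro sum.cong) (auto simp: indicator_def floor_ind_iff[OF u] floor_ind_iff'[OF u])
  finally show ?thesis by simp
qed

lemma floor_bounds:
  fixes u :: real assumes u: "0 \<le> u"
  shows "ennreal u \<le> 1 + of_nat (nat \<lfloor>u\<rfloor>)" and "of_nat (nat \<lfloor>u\<rfloor>) \<le> ennreal u"
proof -
  have r: "real (nat \<lfloor>u\<rfloor>) = of_int \<lfloor>u\<rfloor>" using u by simp
  have "u \<le> 1 + real (nat \<lfloor>u\<rfloor>)" unfolding r by linarith
  then have "ennreal u \<le> ennreal (1 + real (nat \<lfloor>u\<rfloor>))" by (rule ennreal_leI)
  moreover have "ennreal (1 + real (nat \<lfloor>u\<rfloor>)) = 1 + of_nat (nat \<lfloor>u\<rfloor>)"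
    by (simp add: ennreal_of_nat_eq_real_of_nat)
  ultimately show "ennreal u \<le> 1 + of_nat (nat \<lfloor>u\<rfloor>)" by simp
  have "real (nat \<lfloor>u\<rfloor>) \<le> u" unfolding r by linarith
  then show "of_nat (nat \<lfloor>u\<rfloor>) \<le> ennreal u"
    by (simp add: ennreal_of_nat_eq_real_of_nat ennreal_leI)
qed

lemma amgm_N: "(N::real) > 0 \<Longrightarrow> a * b \<le> (N * a\<^sup>2 + b\<^sup>2 / N) / 2"
proof -
  assume N: "N > 0"
  have "0 \<le> (N*a - b)\<^sup>2 / N" using N by simp
  also have "(N*a - b)\<^sup>2 / N = N * a\<^sup>2 + b\<^sup>2 / N - 2 * (a * b)"
    using N by (simp add: power2_eq_square field_simps)
  finally have h: "0 \<le> N * a\<^sup>2 + b\<^sup>2 / N - 2 * (a * b)" .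
  define X where "X = N * a\<^sup>2 + b\<^sup>2 / N"
  define Y where "Y = a * b"
  from h have "0 \<le> X - 2 * Y" unfolding X_def Y_def .
  then have "Y \<le> X / 2" by linarith
  then show ?thesis unfolding X_def Y_def .
qed



lemma ennreal_lin2: "0 \<le> x \<Longrightarrow> 0 \<le> y \<Longrightarrow> 0 \<le> z \<Longrightarrow> 0 \<le> w \<Longrightarrow>
  ennreal (x * y + z * w) = ennreal x * ennreal y + ennreal z * ennreal w"
  by (simp add: ennreal_plus ennreal_mult)

lemma ennreal_lin1: "0 \<le> x \<Longrightarrow> 0 \<le> y \<Longrightarrow> 0 \<le> z \<Longrightarrow>
  ennreal (x * y + z) = ennreal x * ennreal y + ennreal z"
  by (simp add: ennreal_plus ennreal_mult)

lemma ennreal_lin4: "0 \<le> (x::real) \<Longrightarrow> 0 \<le> y \<Longrightarrow> 0 \<le> z \<Longrightarrow> 0 \<le> w \<Longrightarrow>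
  2 * ennreal x + 2 * ennreal y + ennreal z * ennreal w = ennreal (2*x + 2*y + z*w)"
  by (simp add: ennreal_plus ennreal_mult ennreal_mult')

theorem lemma5p2:
  fixes M :: "'m measure"
    and Xs :: "'m \<Rightarrow> 'x::euclidean_space"
    and Ys :: "'m \<Rightarrow> 'y::euclidean_space"
    and eta :: "'m \<Rightarrow> 'y"
    and p q :: "'x \<Rightarrow> real"
    and rho0 :: "'x \<Rightarrow> 'y \<Rightarrow> real"
    and a b a' b' :: "real \<Rightarrow> real"
    and v0 :: "'x \<Rightarrow> 'y \<Rightarrow> real \<Rightarrow> 'y"
  assumes M: "prob_space M"
    and Xs_rv: "Xs \<in> M \<rightarrow>\<^sub>M borel" and Ys_rv: "Ys \<in> M \<rightarrow>\<^sub>M borel"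
    and eta_rv: "eta \<in> M \<rightarrow>\<^sub>M borel"
    and p_nonneg: "\<And>x. 0 \<le> p x" and p_meas: "p \<in> borel_measurable borel"
    and Xs_density: "distr M lborel Xs = density lborel (\<lambda>x. ennreal (p x))"
    and rho0_nonneg: "\<And>x y. 0 \<le> rho0 x y"
    and rho0_cond: "\<And>A B. A \<in> sets borel \<Longrightarrow> B \<in> sets borel \<Longrightarrow>
        emeasure M {\<omega> \<in> space M. Xs \<omega> \<in> A \<and> Ys \<omega> \<in> B}
        = (\<integral>\<^sup>+ x\<in>A. ennreal (p x) * (\<integral>\<^sup>+ y\<in>B. ennreal (rho0 x y) \<partial>lborel) \<partial>lborel)"
    and q_nonneg: "\<And>x. 0 \<le> q x" and q_meas: "q \<in> borel_measurable borel"
    and q_prob: "(\<integral>\<^sup>+ x. ennreal (q x) \<partial>lborel) = 1"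
    and supp: "{x. 0 < q x} \<subseteq> {x. 0 < p x}"
    and eta_gauss: "distr M lborel eta = std_gauss"
    and eta_indep: "prob_space.indep_set M (sets (vimage_algebra (space M) eta borel))
        (sets (vimage_algebra (space M) (\<lambda>\<omega>. (Xs \<omega>, Ys \<omega>)) borel))"
    and a_deriv: "\<And>t. t \<in> {0..1} \<Longrightarrow> (a has_real_derivative a' t) (at t within {0..1})"
    and b_deriv: "\<And>t. t \<in> {0..1} \<Longrightarrow> (b has_real_derivative b' t) (at t within {0..1})"
    and a'_cont: "continuous_on {0..1} a'" and b'_cont: "continuous_on {0..1} b'"
    and ab_ends: "a 0 = 1" "b 1 = 1" "a 1 = 0" "b 0 = 0"
    and v0_def: "\<And>t i. t \<in> {0..1} \<Longrightarrow> i \<in> Basis \<Longrightarrow>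
        AE \<omega> in M. v0 (Xs \<omega>) (a t *\<^sub>R eta \<omega> + b t *\<^sub>R Ys \<omega>) t \<bullet> i
          = real_cond_exp M
              (vimage_algebra (space M) (\<lambda>\<omega>. (Xs \<omega>, a t *\<^sub>R eta \<omega> + b t *\<^sub>R Ys \<omega>)) borel)
              (\<lambda>\<omega>. (a' t *\<^sub>R eta \<omega> + b' t *\<^sub>R Ys \<omega>) \<bullet> i) \<omega>"
    and hyp_i: "\<And>x. 0 < p x \<Longrightarrow> well_posed (v0 x) \<and>
        flow_law (v0 x) = density lborel (\<lambda>y. ennreal (rho0 x y))"
    and hyp_ii: "(\<integral>\<^sup>+ \<omega>. ennreal (norm (Ys \<omega>) ^ 4) \<partial>M) < \<infinity>"
    and hyp_iii: "\<exists>s>0. (\<integral>\<^sup>+ \<omega>. ennreal (exp (s * \<bar>q (Xs \<omega>) / p (Xs \<omega>)\<bar>)) \<partial>M) < \<infinity>"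
  shows "\<exists>c1 c2 :: real. \<forall>(T :: 'w measure) (vhat :: 'w \<Rightarrow> 'x \<Rightarrow> 'y \<Rightarrow> real \<Rightarrow> 'y)
            (dl :: real) (du :: real) (N :: nat).
      prob_space T \<and> 2 \<le> N \<and>
      (\<forall>\<omega> x y t. \<forall>i\<in>Basis. dl \<le> vhat \<omega> x y t \<bullet> i \<and> vhat \<omega> x y t \<bullet> i \<le> du) \<and>
      (\<forall>\<omega> x. well_posed (vhat \<omega> x)) \<longrightarrow>
      W2_risk q rho0 T vhat
        \<le> ennreal c1 * W2_risk p rho0 T vhat * ennreal (ln (real N))
          + ennreal (c2 * real DIM('y) * (max (du\<^sup>2) (dl\<^sup>2) + 1) / real N)"
proof -
  interpret M: prob_space M by (rule M)
  have Pg: "prob_space (std_gauss :: 'y measure)"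
  proof -
    have "prob_space (distr M lborel eta)" using eta_rv by (intro M.prob_space_distr) simp
    then show ?thesis using eta_gauss by simp
  qed
  have sg: "sets (std_gauss :: 'y measure) = sets borel" by (simp add: std_gauss_def)
  define G where "G = (\<integral>\<^sup>+ z. ennreal ((norm z)\<^sup>2) \<partial>(std_gauss :: 'y measure))"
  have Gfin: "G < \<infinity>" unfolding G_def by (rule gauss_moment_finite[OF Pg])
  define Gr where "Gr = enn2real G"
  have G_eq: "G = ennreal Gr" using Gfin unfolding Gr_def by (simp add: ennreal_enn2real less_top[symmetric])
  have Gr0: "0 \<le> Gr" unfolding Gr_def by simp
  obtain s where s0: "s > 0" and A1fin: "(\<integral>\<^sup>+ \<omega>. ennreal (exp (s * \<bar>q (Xs \<omega>) / p (Xs \<omega>)\<bar>)) \<partial>M) < \<infinity>"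
    using hyp_iii by blast
  define A1 where "A1 = (\<integral>\<^sup>+ \<omega>. ennreal (exp (s * \<bar>q (Xs \<omega>) / p (Xs \<omega>)\<bar>)) \<partial>M)"
  define A2 where "A2 = (\<integral>\<^sup>+ \<omega>. ennreal (norm (Ys \<omega>) ^ 4) \<partial>M)"
  define A1r where "A1r = enn2real A1"
  define A2r where "A2r = enn2real A2"
  have A1_eq: "A1 = ennreal A1r" using A1fin unfolding A1r_def A1_def by (simp add: ennreal_enn2real less_top[symmetric])
  have A2_eq: "A2 = ennreal A2r" using hyp_ii unfolding A2r_def A2_def by (simp add: ennreal_enn2real less_top[symmetric])
  have A1r0: "0 \<le> A1r" and A2r0: "0 \<le> A2r" unfolding A1r_def A2r_def by simp_all
  define C where "C = (4 / s)\<^sup>2"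
  have C0: "0 \<le> C" unfolding C_def by simp
  define a where "a = (C * A1r + 1) / 2"
  define b where "b = (C * A1r + A2r) / 2"
  have a0: "0 \<le> a" and b0: "0 \<le> b" unfolding a_def b_def using C0 A1r0 A2r0 by simp_all
  define c2 where "c2 = 2 * a + 2 * b + 4 * Gr * a + 4 * a"
  define r where "r x = q x / p x" for x
  have rm: "r \<in> borel_measurable borel" unfolding r_def using p_meas q_meas by measurable
  define nu where "nu x = density lborel (\<lambda>y. ennreal (rho0 x y))" for x
  have nu_fl: "nu x = flow_law (v0 x)" if "0 < p x" for x using hyp_i[OF that] unfolding nu_def by simp
  have nu_prob: "prob_space (nu x)" if px: "0 < p x" for x
  proof -
    have "flow_end (v0 x) \<in> borel_measurable borel"
      using hyp_i[OF px] unfolding well_posed_def by simp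
    then have "flow_end (v0 x) \<in> measurable (std_gauss::'y measure) lborel"
      unfolding measurable_lborel1 measurable_cong_sets[OF sg refl] .
    then show "prob_space (nu x)" unfolding nu_fl[OF px] flow_law_def by (rule prob_space.prob_space_distr[OF Pg])
  qed
  define Ck where "Ck k = {y::'y. real (Suc k) \<le> (norm y)\<^sup>2}" for k
  have Ck_sets: "Ck k \<in> sets borel" for k unfolding Ck_def by measurable
  have ex: "\<forall>k. \<exists>U. U \<in> borel_measurable borel \<and> (\<forall>x. 0 < p x \<longrightarrow> ennreal (p x) * emeasure (nu x) (Ck k) \<le> U x) \<and>
     (\<forall>A \<in> sets borel. (\<integral>\<^sup>+ x. U x * indicator A x \<partial>lborel) = emeasure M {\<omega>\<in>space M. Xs \<omega> \<in> A \<and> Ys \<omega> \<in> Ck k})"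
  proof
    fix k
    show "\<exists>U. U \<in> borel_measurable borel \<and> (\<forall>x. 0 < p x \<longrightarrow> ennreal (p x) * emeasure (nu x) (Ck k) \<le> U x) \<and>
     (\<forall>A \<in> sets borel. (\<integral>\<^sup>+ x. U x * indicator A x \<partial>lborel) = emeasure M {\<omega>\<in>space M. Xs \<omega> \<in> A \<and> Ys \<omega> \<in> Ck k})"
      using disint_upper[OF M Xs_rv Ys_rv p_nonneg p_meas Xs_density rho0_cond nu_prob[unfolded nu_def] Ck_sets[of k]]
      unfolding nu_def Bex_def .
  qed
  obtain U where U: "\<forall>k. U k \<in> borel_measurable borel \<and> (\<forall>x. 0 < p x \<longrightarrow> ennreal (p x) * emeasure (nu x) (Ck k) \<le> U k x) \<and>
     (\<forall>A \<in> sets borel. (\<integral>\<^sup>+ x. U k x * indicator A x \<partial>lborel) = emeasure M {\<omega>\<in>space M. Xs \<omega> \<in> A \<and> Ys \<omega> \<in> Ck k})"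
    using choice[OF ex] by (elim exE) (rule that)
  have Um: "\<And>k. U k \<in> borel_measurable borel" using U by blast
  have U1: "\<And>k x. 0 < p x \<Longrightarrow> ennreal (p x) * emeasure (nu x) (Ck k) \<le> U k x" using U by blast
  have U2: "\<And>k A. A \<in> sets borel \<Longrightarrow> (\<integral>\<^sup>+ x. U k x * indicator A x \<partial>lborel) = emeasure M {\<omega>\<in>space M. Xs \<omega> \<in> A \<and> Ys \<omega> \<in> Ck k}"
    using U by blast
  have U3: "(\<integral>\<^sup>+ x. U k x * f x \<partial>lborel) = (\<integral>\<^sup>+ \<omega>. indicator (Ck k) (Ys \<omega>) * f (Xs \<omega>) \<partial>M)"
    if fm: "f \<in> borel_measurable borel" for k f
  proof -
    define h where "h \<omega> = (indicator (Ck k) (Ys \<omega>) :: ennreal)" for \<omega>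
    have hm: "h \<in> borel_measurable M" unfolding h_def using Ys_rv Ck_sets by measurable
    have eqm: "density lborel (U k) = distr (density M h) lborel Xs"
    proof (rule measure_eqI)
      show "sets (density lborel (U k)) = sets (distr (density M h) lborel Xs)" by simp
      fix A assume "A \<in> sets (density lborel (U k))"
      then have A: "A \<in> sets borel" by simp
      have Aset: "{\<omega>\<in>space M. Xs \<omega> \<in> A \<and> Ys \<omega> \<in> Ck k} \<in> sets M"
        using Xs_rv Ys_rv A Ck_sets by measurable
      have "emeasure (density lborel (U k)) A = (\<integral>\<^sup>+ x. U k x * indicator A x \<partial>lborel)"
        using Um A by (intro emeasure_density) auto
      also have "\<dots> = emeasure M {\<omega>\<in>space M. Xs \<omega> \<in> A \<and> Ys \<omega> \<in> Ck k}" by (rule U2[OF A])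
      also have "\<dots> = (\<integral>\<^sup>+ \<omega>. indicator {\<omega>\<in>space M. Xs \<omega> \<in> A \<and> Ys \<omega> \<in> Ck k} \<omega> \<partial>M)"
        using Aset by simp
      also have "\<dots> = (\<integral>\<^sup>+ \<omega>. h \<omega> * indicator (Xs -` A \<inter> space M) \<omega> \<partial>M)"
        by (intro nn_integral_cong) (auto simp: h_def split: split_indicator)
      also have "\<dots> = emeasure (density M h) (Xs -` A \<inter> space M)"
        using hm Xs_rv A by (intro emeasure_density[symmetric]) auto
      also have "\<dots> = emeasure (distr (density M h) lborel Xs) A"
        using Xs_rv A by (subst emeasure_distr) auto
      finally show "emeasure (density lborel (U k)) A = emeasure (distr (density M h) lborel Xs) A" .
    qed
    have "(\<integral>\<^sup>+ x. U k x * f x \<partial>lborel) = (\<integral>\<^sup>+ x. f x \<partial>density lborel (U k))"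
      using Um fm by (simp add: nn_integral_density)
    also have "\<dots> = (\<integral>\<^sup>+ x. f x \<partial>distr (density M h) lborel Xs)" by (simp add: eqm)
    also have "\<dots> = (\<integral>\<^sup>+ \<omega>. f (Xs \<omega>) \<partial>density M h)" using Xs_rv fm by (intro nn_integral_distr) auto
    also have "\<dots> = (\<integral>\<^sup>+ \<omega>. h \<omega> * f (Xs \<omega>) \<partial>M)" using hm Xs_rv fm by (intro nn_integral_density) auto
    finally show ?thesis unfolding h_def .
  qed
  have PX: "(\<integral>\<^sup>+ x. ennreal (p x) * f x \<partial>lborel) = (\<integral>\<^sup>+ \<omega>. f (Xs \<omega>) \<partial>M)"
    if fm: "f \<in> borel_measurable borel" for f
  proof -
    have "(\<integral>\<^sup>+ x. ennreal (p x) * f x \<partial>lborel) = (\<integral>\<^sup>+ x. f x \<partial>density lborel (\<lambda>x. ennreal (p x)))"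
      using p_meas fm by (simp add: nn_integral_density)
    also have "\<dots> = (\<integral>\<^sup>+ x. f x \<partial>distr M lborel Xs)" by (simp add: Xs_density)
    also have "\<dots> = (\<integral>\<^sup>+ \<omega>. f (Xs \<omega>) \<partial>M)" using Xs_rv fm by (intro nn_integral_distr) auto
    finally show ?thesis .
  qed
  have Phi: "ennreal (p x) * (\<integral>\<^sup>+ y. ennreal ((norm y)\<^sup>2) \<partial>nu x) \<le> ennreal (p x) + (\<Sum>k. U k x)"
    if px: "0 < p x" for x
  proof -
    interpret P: prob_space "nu x" by (rule nu_prob[OF px])
    have snu: "sets (nu x) = sets borel" by (simp add: nu_def)
    have indm: "(\<lambda>y. indicator (Ck k) y :: ennreal) \<in> borel_measurable (nu x)" for k
      using Ck_sets[of k] snu by (simp add: measurable_cong_sets[OF snu refl])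
    have "(\<integral>\<^sup>+ y. ennreal ((norm y)\<^sup>2) \<partial>nu x) \<le> (\<integral>\<^sup>+ y. 1 + (\<Sum>k. indicator (Ck k) y) \<partial>nu x)"
    proof (intro nn_integral_mono)
      fix y :: 'y
      have "(\<Sum>k. indicator (Ck k) y :: ennreal) = (\<Sum>k. indicator {v. real (Suc k) \<le> v} ((norm y)\<^sup>2))"
        by (simp add: Ck_def indicator_def)
      also have "\<dots> = of_nat (nat \<lfloor>(norm y)\<^sup>2\<rfloor>)" by (rule floor_ind_sum) simp
      finally show "ennreal ((norm y)\<^sup>2) \<le> 1 + (\<Sum>k. indicator (Ck k) y)"
        using floor_bounds(1)[of "(norm y)\<^sup>2"] by simp
    qed
    also have "\<dots> = 1 + (\<Sum>k. emeasure (nu x) (Ck k))"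
    proof -
      have "(\<integral>\<^sup>+ y. 1 + (\<Sum>k. indicator (Ck k) y) \<partial>nu x) = (\<integral>\<^sup>+ y. 1 \<partial>nu x) + (\<integral>\<^sup>+ y. (\<Sum>k. indicator (Ck k) y) \<partial>nu x)"
        using indm by (intro nn_integral_add) auto
      also have "(\<integral>\<^sup>+ y. (\<Sum>k. indicator (Ck k) y) \<partial>nu x) = (\<Sum>k. \<integral>\<^sup>+ y. indicator (Ck k) y \<partial>nu x)"
        using indm by (intro nn_integral_suminf) auto
      also have "\<dots> = (\<Sum>k. emeasure (nu x) (Ck k))"
        using Ck_sets snu by (intro suminf_cong) simp
      finally show ?thesis by (simp add: P.emeasure_space_1)
    qed
    finally have "ennreal (p x) * (\<integral>\<^sup>+ y. ennreal ((norm y)\<^sup>2) \<partial>nu x) \<le> ennreal (p x) * (1 + (\<Sum>k. emeasure (nu x) (Ck k)))"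
      by (rule mult_left_mono) simp
    also have "\<dots> = ennreal (p x) + (\<Sum>k. ennreal (p x) * emeasure (nu x) (Ck k))"
      by (simp add: distrib_left)
    also have "\<dots> \<le> ennreal (p x) + (\<Sum>k. U k x)"
      by (intro add_left_mono suminf_le U1[OF px]) (auto intro: summableI)
    finally show ?thesis .
  qed
  show ?thesis
  proof (rule exI[of _ "4 / s"], rule exI[of _ c2], intro allI impI)
    fix T :: "'w measure" and vhat :: "'w \<Rightarrow> 'x \<Rightarrow> 'y \<Rightarrow> real \<Rightarrow> 'y" and dl du :: real and N :: nat
    assume H: "prob_space T \<and> 2 \<le> N \<and>
      (\<forall>\<omega> x y t. \<forall>i\<in>Basis. dl \<le> vhat \<omega> x y t \<bullet> i \<and> vhat \<omega> x y t \<bullet> i \<le> du) \<and>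
      (\<forall>\<omega> x. well_posed (vhat \<omega> x))"
    then have PT: "prob_space T" and N2: "2 \<le> N"
      and bd: "\<And>\<omega> x. \<forall>y t. \<forall>i\<in>Basis. dl \<le> vhat \<omega> x y t \<bullet> i \<and> vhat \<omega> x y t \<bullet> i \<le> du"
      and wp: "\<And>\<omega> x. well_posed (vhat \<omega> x)" by auto
    interpret T: prob_space T by (rule PT)
    have Nr: "2 \<le> real N" using N2 by simp
    have lnN: "0 \<le> ln (real N)" using Nr by simp
    define t where "t = (4 / s) * ln (real N)"
    have t0: "0 \<le> t" unfolding t_def using s0 lnN by simp
    define d2 where "d2 = max (du\<^sup>2) (dl\<^sup>2)"
    have d20: "0 \<le> d2" unfolding d2_def by (simp add: le_max_iff_disj)
    define d where "d = real DIM('y)"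
    have d1: "1 \<le> d" unfolding d_def by (simp add: DIM_positive Suc_le_eq)
    define D where "D = d * d2"
    have D0: "0 \<le> D" unfolding D_def using d1 d20 by simp
    define tail where "tail = {x. t < r x}"
    have tail_sets: "tail \<in> sets borel" unfolding tail_def using rm by measurable
    define bb where "bb x = indicator tail x * (2 * ennreal (r x) * (ennreal (p x) + (\<Sum>k. U k x)) + ennreal (q x) * ennreal (4 * Gr + 4 * D))" for x
    have bbm: "bb \<in> borel_measurable borel" unfolding bb_def using tail_sets rm p_meas q_meas Um by measurable
    define W where "W \<omega> x = W2sq (density lborel (\<lambda>y. ennreal (rho0 x y))) (flow_law (vhat \<omega> x))" for \<omega> x
    have P1: "ennreal (q x) * W \<omega> x \<le> ennreal t * (ennreal (p x) * W \<omega> x) + bb x" for \<omega> x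
    proof (cases "q x = 0")
      case True then show ?thesis by simp
    next
      case False
      then have qx: "0 < q x" using q_nonneg[of x] by simp
      then have px: "0 < p x" using supp by auto
      have qrp: "q x = r x * p x" unfolding r_def using px by simp
      show ?thesis
      proof (cases "x \<in> tail")
        case False
        then have "r x \<le> t" unfolding tail_def by simp
        then have "q x \<le> t * p x" unfolding qrp using px by (intro mult_right_mono) auto
        then have "ennreal (q x) * W \<omega> x \<le> ennreal (t * p x) * W \<omega> x"
          by (intro mult_right_mono ennreal_leI) auto
        also have "\<dots> = ennreal t * (ennreal (p x) * W \<omega> x)"
          using t0 px by (simp add: ennreal_mult mult.assoc)
        also have "\<dots> \<le> ennreal t * (ennreal (p x) * W \<omega> x) + bb x" by simp
        finally show ?thesis .
      next
        case True
        then have rt: "t < r x" unfolding tail_def by simp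
        then have r0: "0 \<le> r x" using t0 by simp
        have wb: "W \<omega> x \<le> 2 * (\<integral>\<^sup>+ y. ennreal ((norm y)\<^sup>2) \<partial>nu x) + ennreal (4 * Gr + 4 * D)"
        proof -
          have eqG: "4 * G + ennreal (4 * real DIM('y) * max (du\<^sup>2) (dl\<^sup>2)) = ennreal (4 * Gr + 4 * D)"
          proof -
            have "ennreal (4 * Gr + 4 * D) = ennreal (4 * Gr) + ennreal (4 * D)"
              using Gr0 D0 by (intro ennreal_plus) auto
            also have "ennreal (4 * Gr) = 4 * G" unfolding G_eq using Gr0 by (simp add: ennreal_mult)
            also have "D = real DIM('y) * max (du\<^sup>2) (dl\<^sup>2)" unfolding D_def d_def d2_def ..
            finally show ?thesis unfolding D_def d_def d2_def by (simp add: mult.assoc)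
          qed
          have "W \<omega> x = W2sq (flow_law (v0 x)) (flow_law (vhat \<omega> x))"
            unfolding W_def using hyp_i[OF px] by simp
          also have "\<dots> \<le> 2 * (\<integral>\<^sup>+ y. ennreal ((norm y)\<^sup>2) \<partial>flow_law (v0 x)) + 4 * G + ennreal (4 * real DIM('y) * max (du\<^sup>2) (dl\<^sup>2))"
            unfolding G_def using W2_bound[OF Pg conjunct1[OF hyp_i[OF px]] wp bd] .
          finally have "W \<omega> x \<le> 2 * (\<integral>\<^sup>+ y. ennreal ((norm y)\<^sup>2) \<partial>flow_law (v0 x)) + (4 * G + ennreal (4 * real DIM('y) * max (du\<^sup>2) (dl\<^sup>2)))"
            by (simp only: add.assoc)
          then show ?thesis unfolding nu_fl[OF px] eqG .
        qed
        have "ennreal (q x) * W \<omega> x \<le> ennreal (q x) * (2 * (\<integral>\<^sup>+ y. ennreal ((norm y)\<^sup>2) \<partial>nu x) + ennreal (4 * Gr + 4 * D))"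
          by (rule mult_left_mono[OF wb]) simp
        also have "\<dots> = 2 * (ennreal (r x) * (ennreal (p x) * (\<integral>\<^sup>+ y. ennreal ((norm y)\<^sup>2) \<partial>nu x))) + ennreal (q x) * ennreal (4 * Gr + 4 * D)"
          unfolding qrp using r0 px by (simp add: ennreal_mult distrib_left mult_ac)
        also have "\<dots> \<le> 2 * (ennreal (r x) * (ennreal (p x) + (\<Sum>k. U k x))) + ennreal (q x) * ennreal (4 * Gr + 4 * D)"
          by (intro add_right_mono mult_left_mono Phi[OF px]) auto
        also have "\<dots> = bb x" unfolding bb_def using True by (simp add: mult.assoc)
        also have "\<dots> \<le> ennreal t * (ennreal (p x) * W \<omega> x) + bb x" by simp
        finally show ?thesis .
      qed
    qed
    have tfin: "ennreal t < top" by simp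
    have I1: "(\<integral>\<^sup>+ x. ennreal (q x) * W \<omega> x \<partial>lborel) \<le> ennreal t * (\<integral>\<^sup>+ x. ennreal (p x) * W \<omega> x \<partial>lborel) + integral\<^sup>N lborel bb" for \<omega>
    proof -
      have "(\<integral>\<^sup>+ x. ennreal (q x) * W \<omega> x \<partial>lborel) \<le> (\<integral>\<^sup>+ x. ennreal t * (ennreal (p x) * W \<omega> x) + bb x \<partial>lborel)"
        by (intro nn_integral_mono P1)
      also have "\<dots> \<le> (\<integral>\<^sup>+ x. ennreal t * (ennreal (p x) * W \<omega> x) \<partial>lborel) + integral\<^sup>N lborel bb"
        by (rule nn_integral_add_le_meas) (use bbm in simp)
      also have "(\<integral>\<^sup>+ x. ennreal t * (ennreal (p x) * W \<omega> x) \<partial>lborel) \<le> ennreal t * (\<integral>\<^sup>+ x. ennreal (p x) * W \<omega> x \<partial>lborel)"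
        by (rule nn_integral_cmult_le[OF tfin])
      finally show ?thesis by (simp add: add_right_mono)
    qed
    define Bb where "Bb = integral\<^sup>N lborel bb"
    have I2: "W2_risk q rho0 T vhat \<le> ennreal t * W2_risk p rho0 T vhat + Bb"
    proof -
      have "W2_risk q rho0 T vhat = (\<integral>\<^sup>+ \<omega>. (\<integral>\<^sup>+ x. ennreal (q x) * W \<omega> x \<partial>lborel) \<partial>T)"
        unfolding W2_risk_def W_def ..
      also have "\<dots> \<le> (\<integral>\<^sup>+ \<omega>. ennreal t * (\<integral>\<^sup>+ x. ennreal (p x) * W \<omega> x \<partial>lborel) + Bb \<partial>T)"
        unfolding Bb_def by (intro nn_integral_mono I1)
      also have "\<dots> \<le> (\<integral>\<^sup>+ \<omega>. ennreal t * (\<integral>\<^sup>+ x. ennreal (p x) * W \<omega> x \<partial>lborel) \<partial>T) + (\<integral>\<^sup>+ \<omega>. Bb \<partial>T)"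
        by (rule nn_integral_add_le_meas) simp
      also have "(\<integral>\<^sup>+ \<omega>. Bb \<partial>T) = Bb" by (simp add: T.emeasure_space_1)
      also have "(\<integral>\<^sup>+ \<omega>. ennreal t * (\<integral>\<^sup>+ x. ennreal (p x) * W \<omega> x \<partial>lborel) \<partial>T) \<le> ennreal t * W2_risk p rho0 T vhat"
        unfolding W2_risk_def W_def by (rule nn_integral_cmult_le[OF tfin])
      finally show ?thesis by (simp add: add_right_mono)
    qed
    have Bb_le: "Bb \<le> ennreal (c2 * real DIM('y) * (max (du\<^sup>2) (dl\<^sup>2) + 1) / real N)"
    proof -
      define f where "f x = ennreal (r x) * indicator tail x" for x
      have fm: "f \<in> borel_measurable borel" unfolding f_def using rm tail_sets by measurable
      have Npos: "0 < real N" using Nr by simp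
      have N1: "1 \<le> real N" using Nr by simp
      define e where "e \<omega> = exp (s * \<bar>q (Xs \<omega>) / p (Xs \<omega>)\<bar>)" for \<omega>
      have em: "(\<lambda>\<omega>. ennreal (e \<omega>)) \<in> borel_measurable M" unfolding e_def using Xs_rv p_meas q_meas by measurable
      have y4m: "(\<lambda>\<omega>. ennreal (norm (Ys \<omega>) ^ 4)) \<in> borel_measurable M" using Ys_rv by measurable
      have fXm: "(\<lambda>\<omega>. f (Xs \<omega>)) \<in> borel_measurable M" using fm Xs_rv by measurable
      have indm: "(\<lambda>\<omega>. indicator (Ck k) (Ys \<omega>) * f (Xs \<omega>) :: ennreal) \<in> borel_measurable M" for k
        using fm Xs_rv Ys_rv Ck_sets[of k] by measurable
      have tailpt: "r x * u \<le> C / (2 * real N) * exp (s * \<bar>q x / p x\<bar>) + 1 / (2 * real N) * u\<^sup>2"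
        if xt: "x \<in> tail" for x u
      proof -
        have rt: "(4 / s) * ln (real N) < r x" using xt unfolding tail_def t_def by simp
        have r0: "0 < r x" using rt s0 lnN by (smt (verit) divide_pos_pos mult_nonneg_nonneg)
        have ab: "\<bar>q x / p x\<bar> = r x" using r0 unfolding r_def by (rule abs_of_pos)
        have E: "exp (s * \<bar>q x / p x\<bar>) = exp (s * r x)" by (simp only: ab)
        have sq: "(r x)\<^sup>2 \<le> C * exp (s * r x) / (real N)\<^sup>2"
          unfolding C_def by (rule tail_ineq[OF s0 N1 rt])
        have "r x * u \<le> (real N * (r x)\<^sup>2 + u\<^sup>2 / real N) / 2" by (rule amgm_N[OF Npos])
        also have "(real N * (r x)\<^sup>2 + u\<^sup>2 / real N) / 2 \<le> (real N * (C * exp (s * r x) / (real N)\<^sup>2) + u\<^sup>2 / real N) / 2"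
        proof -
          have h: "real N * (r x)\<^sup>2 \<le> real N * (C * exp (s * r x) / (real N)\<^sup>2)"
            using sq Npos by (intro mult_left_mono) auto
          define A where "A = real N * (r x)\<^sup>2"
          define A' where "A' = real N * (C * exp (s * r x) / (real N)\<^sup>2)"
          define B where "B = u\<^sup>2 / real N"
          have "(A + B) / 2 \<le> (A' + B) / 2" using h[folded A_def A'_def] by (intro divide_right_mono add_right_mono) auto
          then show ?thesis unfolding A_def A'_def B_def .
        qed
        also have "(real N * (C * exp (s * r x) / (real N)\<^sup>2) + u\<^sup>2 / real N) / 2 = C / (2 * real N) * exp (s * r x) + 1 / (2 * real N) * u\<^sup>2"
          using Npos by (simp add: field_simps power2_eq_square)
        finally show ?thesis unfolding E .
      qed
      have Ef: "(\<integral>\<^sup>+ \<omega>. f (Xs \<omega>) \<partial>M) \<le> ennreal (a / real N)"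
      proof -
        have "(\<integral>\<^sup>+ \<omega>. f (Xs \<omega>) \<partial>M) \<le> (\<integral>\<^sup>+ \<omega>. ennreal (C / (2 * real N)) * ennreal (e \<omega>) + ennreal (1 / (2 * real N)) \<partial>M)"
        proof (intro nn_integral_mono)
          fix \<omega>
          show "f (Xs \<omega>) \<le> ennreal (C / (2 * real N)) * ennreal (e \<omega>) + ennreal (1 / (2 * real N))"
          proof (cases "Xs \<omega> \<in> tail")
            case True
            have "r (Xs \<omega>) * 1 \<le> C / (2 * real N) * e \<omega> + 1 / (2 * real N) * 1\<^sup>2"
              unfolding e_def by (rule tailpt[OF True])
            then have "ennreal (r (Xs \<omega>)) \<le> ennreal (C / (2 * real N) * e \<omega> + 1 / (2 * real N))"
              by (intro ennreal_leI) simp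
            also have "\<dots> = ennreal (C / (2 * real N)) * ennreal (e \<omega>) + ennreal (1 / (2 * real N))"
              using C0 Npos by (intro ennreal_lin1) (auto simp: e_def)
            finally show ?thesis using True by (simp add: f_def)
          qed (simp add: f_def)
        qed
        also have "\<dots> = ennreal (C / (2 * real N)) * A1 + ennreal (1 / (2 * real N))"
          unfolding A1_def using em
          by (simp add: nn_integral_add nn_integral_cmult M.emeasure_space_1 e_def)
        also have "\<dots> = ennreal (a / real N)"
          unfolding A1_eq a_def using C0 A1r0 Npos
          by (simp add: ennreal_mult[symmetric] ennreal_plus[symmetric] field_simps del: ennreal_plus)
        finally show ?thesis .
      qed
      have Ef2: "(\<Sum>k. \<integral>\<^sup>+ \<omega>. indicator (Ck k) (Ys \<omega>) * f (Xs \<omega>) \<partial>M) \<le> ennreal (b / real N)"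
      proof -
        have "(\<Sum>k. \<integral>\<^sup>+ \<omega>. indicator (Ck k) (Ys \<omega>) * f (Xs \<omega>) \<partial>M) = (\<integral>\<^sup>+ \<omega>. (\<Sum>k. indicator (Ck k) (Ys \<omega>) * f (Xs \<omega>)) \<partial>M)"
          using indm by (intro nn_integral_suminf[symmetric]) auto
        also have "\<dots> \<le> (\<integral>\<^sup>+ \<omega>. ennreal (C / (2 * real N)) * ennreal (e \<omega>) + ennreal (1 / (2 * real N)) * ennreal (norm (Ys \<omega>) ^ 4) \<partial>M)"
        proof (intro nn_integral_mono)
          fix \<omega>
          have "(\<Sum>k. indicator (Ck k) (Ys \<omega>) * f (Xs \<omega>)) = (\<Sum>k. indicator (Ck k) (Ys \<omega>)) * f (Xs \<omega>)"
            by (rule ennreal_suminf_multc)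
          also have "(\<Sum>k. indicator (Ck k) (Ys \<omega>) :: ennreal) = (\<Sum>k. indicator {v. real (Suc k) \<le> v} ((norm (Ys \<omega>))\<^sup>2))"
            by (simp add: Ck_def indicator_def)
          also have "\<dots> = of_nat (nat \<lfloor>(norm (Ys \<omega>))\<^sup>2\<rfloor>)" by (rule floor_ind_sum) simp
          also have "\<dots> \<le> ennreal ((norm (Ys \<omega>))\<^sup>2)" by (rule floor_bounds(2)) simp
          finally have s1: "(\<Sum>k. indicator (Ck k) (Ys \<omega>) * f (Xs \<omega>)) \<le> ennreal ((norm (Ys \<omega>))\<^sup>2) * f (Xs \<omega>)"
            by (simp add: mult_right_mono)
          also have "\<dots> \<le> ennreal (C / (2 * real N)) * ennreal (e \<omega>) + ennreal (1 / (2 * real N)) * ennreal (norm (Ys \<omega>) ^ 4)"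
          proof (cases "Xs \<omega> \<in> tail")
            case True
            have "r (Xs \<omega>) * (norm (Ys \<omega>))\<^sup>2 \<le> C / (2 * real N) * e \<omega> + 1 / (2 * real N) * ((norm (Ys \<omega>))\<^sup>2)\<^sup>2"
              unfolding e_def by (rule tailpt[OF True])
            also have "((norm (Ys \<omega>))\<^sup>2)\<^sup>2 = norm (Ys \<omega>) ^ 4" by (simp flip: power_mult)
            finally have "ennreal (r (Xs \<omega>) * (norm (Ys \<omega>))\<^sup>2) \<le> ennreal (C / (2 * real N) * e \<omega> + 1 / (2 * real N) * norm (Ys \<omega>) ^ 4)"
              by (rule ennreal_leI)
            also have "\<dots> = ennreal (C / (2 * real N)) * ennreal (e \<omega>) + ennreal (1 / (2 * real N)) * ennreal (norm (Ys \<omega>) ^ 4)"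
              using C0 Npos by (intro ennreal_lin2) (auto simp: e_def)
            finally have X: "ennreal (r (Xs \<omega>) * (norm (Ys \<omega>))\<^sup>2) \<le> ennreal (C / (2 * real N)) * ennreal (e \<omega>) + ennreal (1 / (2 * real N)) * ennreal (norm (Ys \<omega>) ^ 4)" .
            have r0: "0 \<le> r (Xs \<omega>)" using True t0 unfolding tail_def by simp
            have fx: "f (Xs \<omega>) = ennreal (r (Xs \<omega>))" using True by (simp add: f_def)
            have eqm: "ennreal ((norm (Ys \<omega>))\<^sup>2) * f (Xs \<omega>) = ennreal (r (Xs \<omega>) * (norm (Ys \<omega>))\<^sup>2)"
              unfolding fx using r0 by (simp add: ennreal_mult mult.commute)
            show ?thesis unfolding eqm by (rule X)
          qed (simp add: f_def)
          finally show "(\<Sum>k. indicator (Ck k) (Ys \<omega>) * f (Xs \<omega>)) \<le> ennreal (C / (2 * real N)) * ennreal (e \<omega>) + ennreal (1 / (2 * real N)) * ennreal (norm (Ys \<omega>) ^ 4)" .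
        qed
        also have "\<dots> = ennreal (C / (2 * real N)) * A1 + ennreal (1 / (2 * real N)) * A2"
          unfolding A1_def A2_def using em y4m
          by (simp add: nn_integral_add nn_integral_cmult e_def)
        also have "\<dots> = ennreal (b / real N)"
          unfolding A1_eq A2_eq b_def using C0 A1r0 A2r0 Npos
          by (simp add: ennreal_mult[symmetric] ennreal_plus[symmetric] field_simps del: ennreal_plus)
        finally show ?thesis .
      qed
      have bb_eq: "bb x = 2 * (ennreal (p x) * f x) + 2 * (\<Sum>k. U k x * f x) + ennreal (4 * Gr + 4 * D) * (ennreal (p x) * f x)" for x
      proof (cases "x \<in> tail")
        case False then show ?thesis by (simp add: bb_def f_def)
      next
        case True
        then have rt: "t < r x" unfolding tail_def by simp
        then have r0: "0 < r x" using t0 by simp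
        then have "p x \<noteq> 0" unfolding r_def by auto
        then have qrp: "q x = r x * p x" unfolding r_def by simp
        have pnn: "0 \<le> p x" by (rule p_nonneg)
        have "(\<Sum>k. U k x * f x) = (\<Sum>k. U k x) * f x" by (rule ennreal_suminf_multc)
        then show ?thesis using True r0 pnn unfolding bb_def qrp
          by (simp add: f_def ennreal_mult distrib_left distrib_right mult_ac)
      qed
      have m1: "(\<lambda>x. ennreal (p x) * f x) \<in> borel_measurable borel" using p_meas fm by measurable
      have m2: "(\<lambda>x. U k x * f x) \<in> borel_measurable borel" for k using Um[of k] fm by measurable
      have m3: "(\<lambda>x. \<Sum>k. U k x * f x) \<in> borel_measurable borel" using m2 by measurable
      have "Bb = (\<integral>\<^sup>+x. 2 * (ennreal (p x) * f x) + 2 * (\<Sum>k. U k x * f x) + ennreal (4 * Gr + 4 * D) * (ennreal (p x) * f x) \<partial>lborel)"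
        unfolding Bb_def bb_eq ..
      also have "\<dots> = 2 * (\<integral>\<^sup>+x. ennreal (p x) * f x \<partial>lborel) + 2 * (\<integral>\<^sup>+x. (\<Sum>k. U k x * f x) \<partial>lborel) + ennreal (4 * Gr + 4 * D) * (\<integral>\<^sup>+x. ennreal (p x) * f x \<partial>lborel)"
        using m1 m3 by (simp add: nn_integral_add nn_integral_cmult)
      also have "(\<integral>\<^sup>+x. (\<Sum>k. U k x * f x) \<partial>lborel) = (\<Sum>k. \<integral>\<^sup>+x. U k x * f x \<partial>lborel)"
        using m2 by (intro nn_integral_suminf) auto
      also have "(\<Sum>k. \<integral>\<^sup>+x. U k x * f x \<partial>lborel) = (\<Sum>k. \<integral>\<^sup>+ \<omega>. indicator (Ck k) (Ys \<omega>) * f (Xs \<omega>) \<partial>M)"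
        using U3[OF fm] by simp
      also have "(\<integral>\<^sup>+x. ennreal (p x) * f x \<partial>lborel) = (\<integral>\<^sup>+ \<omega>. f (Xs \<omega>) \<partial>M)" by (rule PX[OF fm])
      also have "2 * (\<integral>\<^sup>+ \<omega>. f (Xs \<omega>) \<partial>M) + 2 * (\<Sum>k. \<integral>\<^sup>+ \<omega>. indicator (Ck k) (Ys \<omega>) * f (Xs \<omega>) \<partial>M) + ennreal (4 * Gr + 4 * D) * (\<integral>\<^sup>+ \<omega>. f (Xs \<omega>) \<partial>M)
          \<le> 2 * ennreal (a / real N) + 2 * ennreal (b / real N) + ennreal (4 * Gr + 4 * D) * ennreal (a / real N)"
        by (intro add_mono mult_left_mono Ef Ef2) auto
      also have "\<dots> = ennreal (2 * (a / real N) + 2 * (b / real N) + (4 * Gr + 4 * D) * (a / real N))"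
        by (rule ennreal_lin4) (use a0 b0 Gr0 D0 Npos in auto)
      also have "\<dots> \<le> ennreal (c2 * real DIM('y) * (max (du\<^sup>2) (dl\<^sup>2) + 1) / real N)"
      proof (rule ennreal_leI)
        define X where "X = 2 * a + 2 * b + 4 * Gr * a"
        define K where "K = d * (d2 + 1)"
        have X0: "0 \<le> X" unfolding X_def using a0 b0 Gr0 by simp
        have K1: "1 \<le> K" unfolding K_def using d1 d20 by (smt (verit) mult_left_mono mult_cancel_left1)
        have "X * 1 \<le> X * K" using X0 K1 by (intro mult_left_mono) auto
        moreover have "4 * a * (d * d2) \<le> 4 * a * K" unfolding K_def using a0 d1 d20
          by (intro mult_left_mono) (auto simp: distrib_left)
        ultimately have main: "X + 4 * a * (d * d2) \<le> (X + 4 * a) * K" by (simp add: distrib_right)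
        have "2 * (a / real N) + 2 * (b / real N) + (4 * Gr + 4 * D) * (a / real N) = (X + 4 * a * (d * d2)) / real N"
          unfolding X_def D_def using Npos by (simp add: field_simps)
        also have "\<dots> \<le> ((X + 4 * a) * K) / real N" using main Npos by (intro divide_right_mono) auto
        also have "\<dots> = c2 * real DIM('y) * (max (du\<^sup>2) (dl\<^sup>2) + 1) / real N"
          unfolding X_def K_def c2_def d_def d2_def by (simp add: mult.assoc)
        finally show "2 * (a / real N) + 2 * (b / real N) + (4 * Gr + 4 * D) * (a / real N) \<le> c2 * real DIM('y) * (max (du\<^sup>2) (dl\<^sup>2) + 1) / real N" .
      qed
      finally show ?thesis .
    qed
    have "W2_risk q rho0 T vhat \<le> ennreal t * W2_risk p rho0 T vhat + ennreal (c2 * real DIM('y) * (max (du\<^sup>2) (dl\<^sup>2) + 1) / real N)"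
      using I2 Bb_le by (meson add_left_mono order_trans)
    also have "ennreal t = ennreal (4 / s) * ennreal (ln (real N))"
      unfolding t_def using s0 lnN by (intro ennreal_mult) auto
    finally show "W2_risk q rho0 T vhat \<le> ennreal (4 / s) * W2_risk p rho0 T vhat * ennreal (ln (real N))
          + ennreal (c2 * real DIM('y) * (max (du\<^sup>2) (dl\<^sup>2) + 1) / real N)"
      by (simp add: mult_ac)
  qed
qed


end
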